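(* Let $k \geq 1$ be an integer and $\alpha, \beta \in (0,1)$. Let $K = 12k/(\alpha^2 \beta)$ and $p = p(n) \geq (K \log n / n)^{1/k}$. Then with high probability the random graph $\Gamma \sim G(n,p)$ has the following property: for every vertex set $X$ with $|X| \geq \beta n$, there exists a set $Y \subseteq V(\Gamma) \setminus X$ with $|Y| \leq K/p^{k}$ such that every $k$-element set $S \subseteq V(\Gamma) \setminus (X \cup Y)$ satisfies $(1-\alpha) p^k |X| \leq \deg^*(S, X) \leq (1+\alpha) p^k |X|$.
   Context: $G(n,p)$ is the binomial random graph on $n$ vertices in which each pair of vertices is an edge independently with probability $p$. "With high probability" means with probability tending to $1$ as $n \to \infty$. For a vertex set $S$ and a vertex set $X$, $\deg^*(S,X)$ is the number of vertices of $X$ adjacent in $\Gamma$ to every vertex of $S$ (the size of the common neighbourhood of $S$ in $X$). $\log$ is the natural logarithm. *)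

theory Defs
  imports Complex_Main
begin

text \<open>Graphs on the vertex set {0..<n} are represented by their edge sets,
  i.e. sets of 2-element subsets of {0..<n}.\<close>

definition all_edges :: "nat \<Rightarrow> nat set set" where
  "all_edges n = {e. e \<subseteq> {..<n} \<and> card e = 2}"

text \<open>Probability that the binomial random graph G(n,p) satisfies property P:
  each of the possible edges is present independently with probability p.\<close>

definition gnp_prob :: "nat \<Rightarrow> real \<Rightarrow> (nat set set \<Rightarrow> bool) \<Rightarrow> real" where
  "gnp_prob n p P =
     (\<Sum>E\<in>Pow (all_edges n).
        (if P E then p ^ card E * (1 - p) ^ (card (all_edges n) - card E) else 0))"

definition codeg :: "nat set set \<Rightarrow> nat set \<Rightarrow> nat set \<Rightarrow> nat" where
  "codeg E S X = card {x \<in> X. \<forall>s\<in>S. {s, x} \<in> E}"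

definition lemma4p4_property ::
  "nat \<Rightarrow> nat \<Rightarrow> real \<Rightarrow> real \<Rightarrow> real \<Rightarrow> real \<Rightarrow> nat set set \<Rightarrow> bool" where
  "lemma4p4_property n k \<alpha> \<beta> K p E \<longleftrightarrow>
     (\<forall>X. X \<subseteq> {..<n} \<and> real (card X) \<ge> \<beta> * real n \<longrightarrow>
        (\<exists>Y. Y \<subseteq> {..<n} - X \<and> real (card Y) \<le> K / p ^ k \<and>
           (\<forall>S. S \<subseteq> {..<n} - (X \<union> Y) \<and> card S = k \<longrightarrow>
              (1 - \<alpha>) * p ^ k * real (card X) \<le> real (codeg E S X) \<and>
              real (codeg E S X) \<le> (1 + \<alpha>) * p ^ k * real (card X))))"

end

theory Submission
  imports Defs "HOL-Real_Asymp.Real_Asymp"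
begin

definition EE :: "real \<Rightarrow> 'a set \<Rightarrow> ('a set \<Rightarrow> real) \<Rightarrow> real" where
  "EE p A f = (\<Sum>E\<in>Pow A. p ^ card E * (1 - p) ^ (card A - card E) * f E)"

lemma EE_decomp:
  assumes "finite B" "finite C" "B \<inter> C = {}"
  shows "EE p (B \<union> C) f = EE p B (\<lambda>E1. EE p C (\<lambda>E2. f (E1 \<union> E2)))"
proof -
  have inj: "inj_on (\<lambda>(E1, E2). E1 \<union> E2) (Pow B \<times> Pow C)"
    using assms(3) by (auto simp: inj_on_def) blast+
  have img: "Pow (B \<union> C) = (\<lambda>(E1, E2). E1 \<union> E2) ` (Pow B \<times> Pow C)"
  proof
    show "Pow (B \<union> C) \<subseteq> (\<lambda>(E1, E2). E1 \<union> E2) ` (Pow B \<times> Pow C)"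
    proof
      fix E assume "E \<in> Pow (B \<union> C)"
      then have "E = (E \<inter> B) \<union> (E \<inter> C)" "(E \<inter> B, E \<inter> C) \<in> Pow B \<times> Pow C" by auto
      then show "E \<in> (\<lambda>(E1, E2). E1 \<union> E2) ` (Pow B \<times> Pow C)" by (metis (no_types, lifting) case_prod_conv image_eqI)
    qed
  qed auto
  have w: "p ^ card (E1 \<union> E2) * (1 - p) ^ (card (B \<union> C) - card (E1 \<union> E2)) * f (E1 \<union> E2)
      = p ^ card E1 * (1 - p) ^ (card B - card E1) * (p ^ card E2 * (1 - p) ^ (card C - card E2) * f (E1 \<union> E2))"
    if "E1 \<subseteq> B" "E2 \<subseteq> C" for E1 E2
  proof -
    have f1: "finite E1" "finite E2" using that assms by (auto intro: finite_subset)
    have d: "E1 \<inter> E2 = {}" using that assms(3) by auto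
    have c1: "card (E1 \<union> E2) = card E1 + card E2" using card_Un_disjoint[OF f1 d] .
    have c2: "card (B \<union> C) = card B + card C" using card_Un_disjoint[OF assms] .
    have le: "card E1 \<le> card B" "card E2 \<le> card C" using card_mono[OF assms(1) that(1)] card_mono[OF assms(2) that(2)] by auto
    have "card (B \<union> C) - card (E1 \<union> E2) = (card B - card E1) + (card C - card E2)"
      using c1 c2 le by simp
    then show ?thesis using c1 by (simp add: power_add algebra_simps)
  qed
  have "EE p (B \<union> C) f = (\<Sum>(E1,E2)\<in>Pow B \<times> Pow C. p ^ card (E1 \<union> E2) * (1 - p) ^ (card (B \<union> C) - card (E1 \<union> E2)) * f (E1 \<union> E2))"
    unfolding EE_def img by (subst sum.reindex[OF inj]) (simp add: case_prod_unfold)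
  also have "\<dots> = (\<Sum>(E1,E2)\<in>Pow B \<times> Pow C. p ^ card E1 * (1 - p) ^ (card B - card E1) * (p ^ card E2 * (1 - p) ^ (card C - card E2) * f (E1 \<union> E2)))"
    by (rule sum.cong) (auto simp: w)
  also have "\<dots> = EE p B (\<lambda>E1. EE p C (\<lambda>E2. f (E1 \<union> E2)))"
    unfolding EE_def sum.cartesian_product[symmetric] by (simp add: sum_distrib_left)
  finally show ?thesis .
qed

lemma EE_const_mult: "EE p A (\<lambda>E. c * f E) = c * EE p A f"
  unfolding EE_def sum_distrib_left by (intro sum.cong refl) (simp add: mult_ac)

lemma EE_mult_const: "EE p A (\<lambda>E. f E * c) = EE p A f * c"
  unfolding EE_def sum_distrib_right by (intro sum.cong refl) (simp add: mult_ac)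

lemma EE_add: "EE p A (\<lambda>E. f E + g E) = EE p A f + EE p A g"
  unfolding EE_def by (simp add: sum.distrib algebra_simps)

lemma EE_sum: "EE p A (\<lambda>E. \<Sum>i\<in>I. f i E) = (\<Sum>i\<in>I. EE p A (f i))"
  unfolding EE_def by (simp add: sum_distrib_left sum.swap[of _ I])

lemma EE_cong: "(\<And>E. E \<subseteq> A \<Longrightarrow> f E = g E) \<Longrightarrow> EE p A f = EE p A g"
  unfolding EE_def by (intro sum.cong) auto

lemma EE_mono:
  assumes "0 \<le> p" "p \<le> 1" "\<And>E. E \<subseteq> A \<Longrightarrow> f E \<le> g E"
  shows "EE p A f \<le> EE p A g"
  unfolding EE_def using assms by (intro sum_mono mult_left_mono) auto

lemma EE_empty: "EE p {} f = f {}"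
  unfolding EE_def by simp

lemma EE_single: "EE p {a} f = (1 - p) * f {} + p * f {a}"
proof -
  have "Pow {a} = {{}, {a}}" by auto
  then show ?thesis unfolding EE_def by simp
qed

lemma EE_one: "finite A \<Longrightarrow> EE p A (\<lambda>_. 1) = 1"
proof (induction A rule: finite_induct)
  case empty
  then show ?case by (simp add: EE_empty)
next
  case (insert a A)
  have "EE p (insert a A) (\<lambda>_. 1) = EE p ({a} \<union> A) (\<lambda>_. 1)" by simp
  also have "\<dots> = EE p {a} (\<lambda>E1. EE p A (\<lambda>E2. 1))"
    by (rule EE_decomp) (use insert in auto)
  also have "\<dots> = 1" using insert by (simp add: EE_single)
  finally show ?case .
qed

lemma EE_restrict:
  assumes "finite A" "B \<subseteq> A" "\<And>E. f E = f (E \<inter> B)"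
  shows "EE p A f = EE p B f"
proof -
  have fB: "finite B" "finite (A - B)" using assms finite_subset by auto
  have "EE p A f = EE p (B \<union> (A - B)) f" using assms(2) by (simp add: Un_absorb1)
  also have "\<dots> = EE p B (\<lambda>E1. EE p (A - B) (\<lambda>E2. f (E1 \<union> E2)))"
    by (rule EE_decomp) (use fB in auto)
  also have "\<dots> = EE p B (\<lambda>E1. EE p (A - B) (\<lambda>E2. f E1 * 1))"
  proof (rule EE_cong)
    fix E1 assume "E1 \<subseteq> B"
    show "EE p (A - B) (\<lambda>E2. f (E1 \<union> E2)) = EE p (A - B) (\<lambda>E2. f E1 * 1)"
    proof (rule EE_cong)
      fix E2 assume "E2 \<subseteq> A - B"
      then have "(E1 \<union> E2) \<inter> B = E1" using \<open>E1 \<subseteq> B\<close> by auto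
      then show "f (E1 \<union> E2) = f E1 * 1" by (metis assms(3) mult.right_neutral)
    qed
  qed
  also have "\<dots> = EE p B f" by (simp only: EE_const_mult EE_one[OF fB(2)]) simp
  finally show ?thesis .
qed

lemma EE_mult_indep:
  assumes "finite A" "B \<subseteq> A" "\<And>E. f E = f (E \<inter> B)" "\<And>E. g E = g (E \<inter> (A - B))"
  shows "EE p A (\<lambda>E. f E * g E) = EE p A f * EE p A g"
proof -
  have fB: "finite B" "finite (A - B)" using assms finite_subset by auto
  have "EE p A (\<lambda>E. f E * g E) = EE p (B \<union> (A - B)) (\<lambda>E. f E * g E)" using assms(2) by (simp add: Un_absorb1)
  also have "\<dots> = EE p B (\<lambda>E1. EE p (A - B) (\<lambda>E2. f (E1 \<union> E2) * g (E1 \<union> E2)))"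
    by (rule EE_decomp) (use fB in auto)
  also have "\<dots> = EE p B (\<lambda>E1. EE p (A - B) (\<lambda>E2. f E1 * g E2))"
  proof (rule EE_cong)
    fix E1 assume "E1 \<subseteq> B"
    show "EE p (A - B) (\<lambda>E2. f (E1 \<union> E2) * g (E1 \<union> E2)) = EE p (A - B) (\<lambda>E2. f E1 * g E2)"
    proof (rule EE_cong)
      fix E2 assume "E2 \<subseteq> A - B"
      then have "(E1 \<union> E2) \<inter> B = E1" "(E1 \<union> E2) \<inter> (A - B) = E2" using \<open>E1 \<subseteq> B\<close> by auto
      then show "f (E1 \<union> E2) * g (E1 \<union> E2) = f E1 * g E2" by (metis assms(3,4))
    qed
  qed
  also have "\<dots> = EE p B f * EE p (A - B) g"
    by (simp only: EE_const_mult EE_mult_const)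
  also have "\<dots> = EE p A f * EE p A g"
  proof -
    have "EE p A f = EE p B f" by (rule EE_restrict) (use assms in auto)
    moreover have "EE p A g = EE p (A - B) g" by (rule EE_restrict) (use assms in auto)
    ultimately show ?thesis by simp
  qed
  finally show ?thesis .
qed

lemma EE_prod_indep:
  assumes "finite A" "finite J" "\<forall>j\<in>J. B j \<subseteq> A"
    "\<forall>i\<in>J. \<forall>j\<in>J. i \<noteq> j \<longrightarrow> B i \<inter> B j = {}" "\<forall>j\<in>J. \<forall>E. f j E = f j (E \<inter> B j)"
  shows "EE p A (\<lambda>E. \<Prod>j\<in>J. f j E) = (\<Prod>j\<in>J. EE p A (f j))"
  using assms(2-)
proof (induction J rule: finite_induct)
  case empty
  then show ?case using EE_one[OF assms(1)] by simp
next
  case (insert j J)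
  note P1 = insert.prems(1) and P2 = insert.prems(2) and P3 = insert.prems(3)
  have g: "(\<Prod>i\<in>J. f i E) = (\<Prod>i\<in>J. f i (E \<inter> (A - B j)))" for E
  proof (rule prod.cong[OF refl])
    fix i assume i: "i \<in> J"
    then have "i \<noteq> j" using insert.hyps by auto
    then have sub: "B i \<subseteq> A - B j" using P1 P2 i by blast
    have fi: "\<And>E. f i E = f i (E \<inter> B i)" using P3 i by blast
    have e: "E \<inter> (A - B j) \<inter> B i = E \<inter> B i" using sub by blast
    show "f i E = f i (E \<inter> (A - B j))"
      using fi[of E] fi[of "E \<inter> (A - B j)"] e by simp
  qed
  have IH: "EE p A (\<lambda>E. \<Prod>i\<in>J. f i E) = (\<Prod>i\<in>J. EE p A (f i))"
    by (rule insert.IH) (use P1 P2 P3 in blast)+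
  have "EE p A (\<lambda>E. \<Prod>i\<in>insert j J. f i E) = EE p A (\<lambda>E. f j E * (\<Prod>i\<in>J. f i E))"
    using insert.hyps by simp
  also have "\<dots> = EE p A (f j) * EE p A (\<lambda>E. \<Prod>i\<in>J. f i E)"
  proof (rule EE_mult_indep)
    show "B j \<subseteq> A" using P1 by blast
    show "f j E = f j (E \<inter> B j)" for E using P3 by blast
    show "(\<Prod>i\<in>J. f i E) = (\<Prod>i\<in>J. f i (E \<inter> (A - B j)))" for E by (rule g)
  qed (rule assms(1))
  also have "\<dots> = (\<Prod>i\<in>insert j J. EE p A (f i))" using insert.hyps IH by simp
  finally show ?case .
qed

lemma EE_ind:
  assumes "finite A" "B \<subseteq> A"
  shows "EE p A (\<lambda>E. if B \<subseteq> E then 1 else 0) = p ^ card B"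
proof -
  have fB: "finite B" using assms finite_subset by auto
  have "EE p A (\<lambda>E. if B \<subseteq> E then 1 else 0) = EE p B (\<lambda>E. if B \<subseteq> E then 1 else 0)"
    by (rule EE_restrict) (use assms in auto)
  also have "\<dots> = (\<Sum>E\<in>Pow B. if E = B then p ^ card E * (1 - p) ^ (card B - card E) else 0)"
    unfolding EE_def by (rule sum.cong) auto
  also have "\<dots> = p ^ card B" using fB by simp
  finally show ?thesis .
qed

definition edges :: "nat \<Rightarrow> nat set \<Rightarrow> nat set set" where
  "edges x S = (\<lambda>s. {s, x}) ` S"

lemma edges_sub:
  assumes "x \<in> X" "X \<subseteq> {..<n}" "S \<subseteq> {..<n} - X"
  shows "edges x S \<subseteq> all_edges n"
  using assms unfolding edges_def all_edges_def by (auto simp: card_insert_if)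

lemma edges_card:
  assumes "x \<notin> S"
  shows "card (edges x S) = card S"
proof -
  have "inj_on (\<lambda>s. {s, x}) S" using assms by (auto simp: inj_on_def doubleton_eq_iff)
  then show ?thesis unfolding edges_def by (rule card_image)
qed

lemma edges_disj:
  assumes "x \<in> X" "x' \<in> X" "S \<inter> X = {}" "S' \<inter> X = {}" "x \<noteq> x' \<or> S \<inter> S' = {}"
  shows "edges x S \<inter> edges x' S' = {}"
  using assms unfolding edges_def by (auto simp: doubleton_eq_iff)

lemma codeg_sum:
  assumes "finite X"
  shows "real (codeg E S X) = (\<Sum>x\<in>X. if edges x S \<subseteq> E then 1 else 0)"
proof -
  have "codeg E S X = card {x \<in> X. edges x S \<subseteq> E}"
    unfolding codeg_def edges_def by (simp add: image_subset_iff)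
  also have "real \<dots> = (\<Sum>x\<in>X. if edges x S \<subseteq> E then 1 else 0)"
    using assms by (simp add: sum.If_cases Int_def conj_commute)
  finally show ?thesis .
qed

lemma codeg_mgf:
  assumes "X \<subseteq> {..<n}" "S \<subseteq> {..<n} - X" "card S = k"
  shows "EE p (all_edges n) (\<lambda>E. exp (l * real (codeg E S X))) = (1 + p ^ k * (exp l - 1)) ^ card X"
proof -
  have fX: "finite X" using assms finite_subset by auto
  have fA: "finite (all_edges n)" unfolding all_edges_def by auto
  have "EE p (all_edges n) (\<lambda>E. exp (l * real (codeg E S X)))
      = EE p (all_edges n) (\<lambda>E. \<Prod>x\<in>X. exp (l * (if edges x S \<subseteq> E then 1 else 0)))"
    by (rule EE_cong) (simp add: codeg_sum[OF fX] sum_distrib_left exp_sum[OF fX])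
  also have "\<dots> = (\<Prod>x\<in>X. EE p (all_edges n) (\<lambda>E. exp (l * (if edges x S \<subseteq> E then 1 else 0))))"
  proof (rule EE_prod_indep[where B = "\<lambda>x. edges x S"])
    show "\<forall>j\<in>X. edges j S \<subseteq> all_edges n" using edges_sub assms by blast
    show "\<forall>i\<in>X. \<forall>j\<in>X. i \<noteq> j \<longrightarrow> edges i S \<inter> edges j S = {}"
      using edges_disj[of _ X _ S S] assms by blast
    show "\<forall>j\<in>X. \<forall>E. exp (l * (if edges j S \<subseteq> E then 1 else 0)) = exp (l * (if edges j S \<subseteq> E \<inter> edges j S then 1 else 0))"
      by auto
  qed (use fA fX in auto)
  also have "\<dots> = (\<Prod>x\<in>X. 1 + p ^ k * (exp l - 1))"
  proof (rule prod.cong[OF refl])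
    fix x assume x: "x \<in> X"
    have xs: "x \<notin> S" using x assms by auto
    have "EE p (all_edges n) (\<lambda>E. exp (l * (if edges x S \<subseteq> E then 1 else 0)))
       = EE p (all_edges n) (\<lambda>E. 1 + (exp l - 1) * (if edges x S \<subseteq> E then 1 else 0))"
      by (rule EE_cong) auto
    also have "\<dots> = 1 + (exp l - 1) * p ^ card (edges x S)"
      by (simp only: EE_add EE_one[OF fA] EE_const_mult EE_ind[OF fA edges_sub[OF x assms(1,2)]])
    also have "\<dots> = 1 + p ^ k * (exp l - 1)" using edges_card[OF xs] assms(3) by simp
    finally show "EE p (all_edges n) (\<lambda>E. exp (l * (if edges x S \<subseteq> E then 1 else 0))) = 1 + p ^ k * (exp l - 1)" .
  qed
  also have "\<dots> = (1 + p ^ k * (exp l - 1)) ^ card X" by simp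
  finally show ?thesis .
qed

lemma exp_neg_bound:
  fixes l :: real assumes "0 \<le> l"
  shows "exp (- l) \<le> 1 - l + l^2"
proof -
  have "1 + l \<le> exp l" by simp
  have "exp (- l) = 1 / exp l" by (simp add: exp_minus field_simps)
  also have "\<dots> \<le> 1 / (1 + l)" using assms \<open>1 + l \<le> exp l\<close> by (intro divide_left_mono) auto
  also have "\<dots> \<le> 1 - l + l^2"
  proof -
    have "1 \<le> (1 - l + l^2) * (1 + l)" using assms by (simp add: algebra_simps power2_eq_square power3_eq_cube)
    then show ?thesis using assms by (simp add: divide_le_eq)
  qed
  finally show ?thesis .
qed

lemma mgf_pow_bound:
  fixes q y :: real
  assumes "0 \<le> 1 + q * y"
  shows "(1 + q * y) ^ m \<le> exp (real m * q * y)"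
proof -
  have "(1 + q * y) ^ m \<le> exp (q * y) ^ m"
    using assms by (intro power_mono) (simp_all add: exp_ge_add_one_self [of "q*y", simplified add.commute])
  also have "\<dots> = exp (real m * q * y)" by (simp add: exp_of_nat_mult[symmetric] mult.assoc)
  finally show ?thesis .
qed

definition phi :: "real \<Rightarrow> real \<Rightarrow> nat \<Rightarrow> nat set \<Rightarrow> nat set \<Rightarrow> nat set set \<Rightarrow> real" where
  "phi \<alpha> p k X S E =
     exp (\<alpha>/2 * (real (codeg E S X) - (1 + \<alpha>) * p ^ k * real (card X))) +
     exp (\<alpha>/2 * ((1 - \<alpha>) * p ^ k * real (card X) - real (codeg E S X)))"

lemma phi_pos: "0 < phi \<alpha> p k X S E"
  unfolding phi_def by (intro add_pos_pos) auto

lemma phi_ge1: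
  assumes "0 < \<alpha>"
    "\<not> ((1 - \<alpha>) * p ^ k * real (card X) \<le> real (codeg E S X) \<and>
        real (codeg E S X) \<le> (1 + \<alpha>) * p ^ k * real (card X))"
  shows "1 \<le> phi \<alpha> p k X S E"
proof (cases "(1 - \<alpha>) * p ^ k * real (card X) \<le> real (codeg E S X)")
  case True
  then have "real (codeg E S X) > (1 + \<alpha>) * p ^ k * real (card X)" using assms by auto
  then have "1 \<le> exp (\<alpha>/2 * (real (codeg E S X) - (1 + \<alpha>) * p ^ k * real (card X)))"
    using assms(1) by simp
  then show ?thesis unfolding phi_def by (smt (verit) exp_gt_zero)
next
  case False
  then have "1 \<le> exp (\<alpha>/2 * ((1 - \<alpha>) * p ^ k * real (card X) - real (codeg E S X)))"
    using assms(1) by simp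
  then show ?thesis unfolding phi_def by (smt (verit) exp_gt_zero)
qed

lemma phi_EE:
  assumes "X \<subseteq> {..<n}" "S \<subseteq> {..<n} - X" "card S = k" "0 \<le> p" "p \<le> 1" "0 < \<alpha>" "\<alpha> < 1"
  shows "EE p (all_edges n) (phi \<alpha> p k X S) \<le> 2 * exp (- (\<alpha>^2 * p ^ k * real (card X) / 4))"
proof -
  define l where "l = \<alpha> / 2"
  define q where "q = p ^ k"
  define m where "m = card X"
  define \<mu> where "\<mu> = real m * q"
  have l: "0 \<le> l" "l \<le> 1" using assms unfolding l_def by auto
  have q: "0 \<le> q" "q \<le> 1" using assms unfolding q_def by (auto simp: power_le_one)
  have mu: "0 \<le> \<mu>" unfolding \<mu>_def using q by auto
  have split: "phi \<alpha> p k X S E = exp (- (l * (1 + \<alpha>) * \<mu>)) * exp (l * real (codeg E S X))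
      + exp (l * (1 - \<alpha>) * \<mu>) * exp ((- l) * real (codeg E S X))" for E
    unfolding phi_def l_def \<mu>_def q_def m_def mult_exp_exp
    by (intro arg_cong2[where f="(+)"] arg_cong[where f=exp]) (simp_all add: field_simps)
  have "EE p (all_edges n) (phi \<alpha> p k X S)
      = exp (- (l * (1 + \<alpha>) * \<mu>)) * (1 + q * (exp l - 1)) ^ m
        + exp (l * (1 - \<alpha>) * \<mu>) * (1 + q * (exp (- l) - 1)) ^ m"
    unfolding split EE_add EE_const_mult codeg_mgf[OF assms(1-3)] q_def m_def by simp
  also have "\<dots> \<le> exp (- (l * (1 + \<alpha>) * \<mu>)) * exp (real m * q * (exp l - 1))
        + exp (l * (1 - \<alpha>) * \<mu>) * exp (real m * q * (exp (- l) - 1))"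
  proof (intro add_mono mult_left_mono mgf_pow_bound)
    show "0 \<le> 1 + q * (exp l - 1)" using q l by (simp add: mult_nonneg_nonneg)
    have "0 \<le> 1 - q + q * exp (- l)" using q by (simp add: mult_nonneg_nonneg)
    then show "0 \<le> 1 + q * (exp (- l) - 1)" by (simp add: algebra_simps)
  qed auto
  also have "\<dots> = exp (\<mu> * (exp l - 1 - l * (1 + \<alpha>))) + exp (\<mu> * (exp (- l) - 1 + l * (1 - \<alpha>)))"
    unfolding \<mu>_def by (simp add: exp_add[symmetric] algebra_simps)
  also have "\<dots> \<le> exp (- (\<alpha>^2 * q * real m / 4)) + exp (- (\<alpha>^2 * q * real m / 4))"
  proof (intro add_mono)
    have "exp l \<le> 1 + l + l^2" using exp_bound l by blast
    moreover have "l^2 - l * \<alpha> = - (\<alpha>^2 / 4)" "l * (1 + \<alpha>) = l + l * \<alpha>"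
      unfolding l_def by (simp_all add: power2_eq_square field_simps)
    ultimately have "exp l - 1 - l * (1 + \<alpha>) \<le> - (\<alpha>^2 / 4)" by linarith
    then have "\<mu> * (exp l - 1 - l * (1 + \<alpha>)) \<le> \<mu> * (- (\<alpha>^2 / 4))" using mu by (rule mult_left_mono)
    then show "exp (\<mu> * (exp l - 1 - l * (1 + \<alpha>))) \<le> exp (- (\<alpha>^2 * q * real m / 4))"
      unfolding \<mu>_def by (simp add: algebra_simps)
    have "exp (- l) \<le> 1 - l + l^2" using exp_neg_bound l by blast
    moreover have "l^2 - l * \<alpha> = - (\<alpha>^2 / 4)" "l * (1 - \<alpha>) = l - l * \<alpha>"
      unfolding l_def by (simp_all add: power2_eq_square field_simps)
    ultimately have "exp (- l) - 1 + l * (1 - \<alpha>) \<le> - (\<alpha>^2 / 4)" by linarith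
    then have "\<mu> * (exp (- l) - 1 + l * (1 - \<alpha>)) \<le> \<mu> * (- (\<alpha>^2 / 4))" using mu by (rule mult_left_mono)
    then show "exp (\<mu> * (exp (- l) - 1 + l * (1 - \<alpha>))) \<le> exp (- (\<alpha>^2 * q * real m / 4))"
      unfolding \<mu>_def by (simp add: algebra_simps)
  qed
  finally show ?thesis unfolding q_def m_def by simp
qed

lemma max_family:
  fixes U :: "nat set" and bad :: "nat set \<Rightarrow> bool" and k t :: nat
  assumes "finite U" "k \<ge> 1" "t \<ge> 1"
  shows "(\<exists>Y. Y \<subseteq> U \<and> card Y \<le> k * (t - 1) \<and> (\<forall>S. S \<subseteq> U - Y \<and> card S = k \<longrightarrow> \<not> bad S))
       \<or> (\<exists>F. F \<subseteq> {S. S \<subseteq> U \<and> card S = k} \<and> card F = t \<and> pairwise disjnt F \<and> (\<forall>S\<in>F. bad S))"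
proof -
  define G where "G = {F. F \<subseteq> {S. S \<subseteq> U \<and> card S = k \<and> bad S} \<and> pairwise disjnt F \<and> card F \<le> t}"
  have finG: "finite G"
  proof (rule finite_subset)
    show "G \<subseteq> Pow (Pow U)" unfolding G_def by auto
  qed (use assms(1) in auto)
  have "{} \<in> G" unfolding G_def by auto
  define M where "M = Max (card ` G)"
  have "M \<in> card ` G" unfolding M_def using finG \<open>{} \<in> G\<close> by (intro Max_in) auto
  then obtain F where F: "F \<in> G" "card F = M" by auto
  have maxF: "card F' \<le> card F" if "F' \<in> G" for F'
    using F(2) finG that unfolding M_def by (auto intro: Max_ge)
  have Fsub: "F \<subseteq> {S. S \<subseteq> U \<and> card S = k \<and> bad S}" and Fdisj: "pairwise disjnt F" and Ft: "card F \<le> t"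
    using F(1) unfolding G_def by auto
  have "F \<subseteq> Pow U" using Fsub by auto
  then have finF: "finite F" using assms(1) finite_subset by blast
  show ?thesis
  proof (cases "card F = t")
    case True
    then show ?thesis using Fsub Fdisj by (intro disjI2 exI[of _ F]) auto
  next
    case False
    then have lt: "card F < t" using Ft by auto
    define Y where "Y = \<Union>F"
    have "card Y \<le> sum card F" unfolding Y_def by (rule card_Union_le_sum_card)
    also have "sum card F = sum (\<lambda>_. k) F" by (rule sum.cong) (use Fsub in auto)
    also have "\<dots> = k * card F" by simp
    also have "\<dots> \<le> k * (t - 1)" using lt by (intro mult_left_mono) auto
    finally have cY: "card Y \<le> k * (t - 1)" .
    have YU: "Y \<subseteq> U" unfolding Y_def using Fsub by auto
    have "\<forall>S. S \<subseteq> U - Y \<and> card S = k \<longrightarrow> \<not> bad S"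
    proof (intro allI impI notI)
      fix S assume S: "S \<subseteq> U - Y \<and> card S = k" and b: "bad S"
      have "S \<noteq> {}" using S assms(2) by auto
      then have SF: "S \<notin> F" using S unfolding Y_def by auto
      have "insert S F \<in> G"
        unfolding G_def
      proof (intro CollectI conjI)
        show "insert S F \<subseteq> {S. S \<subseteq> U \<and> card S = k \<and> bad S}" using S b Fsub by auto
        show "pairwise disjnt (insert S F)"
          using Fdisj S unfolding pairwise_insert Y_def disjnt_def by auto
        show "card (insert S F) \<le> t" using lt SF finF by simp
      qed
      then have "card (insert S F) \<le> card F" by (rule maxF)
      then show False using SF finF by simp
    qed
    then show ?thesis using YU cY by blast
  qed
qed

lemma gnp_EE: "gnp_prob n p P = EE p (all_edges n) (\<lambda>E. if P E then 1 else 0)"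
  unfolding gnp_prob_def EE_def by (rule sum.cong) auto

lemma choose_le_pow: "(n::nat) choose r \<le> n ^ r"
  by (cases "r \<le> n") (auto simp: binomial_le_pow binomial_eq_0)

lemma codeg_restrict:
  assumes "S \<inter> X = {}"
  shows "codeg E S X = codeg (E \<inter> (\<Union>x\<in>X. edges x S)) S X"
proof -
  have "{x \<in> X. \<forall>s\<in>S. {s, x} \<in> E} = {x \<in> X. \<forall>s\<in>S. {s, x} \<in> E \<inter> (\<Union>x\<in>X. edges x S)}"
    unfolding edges_def by blast
  then show ?thesis unfolding codeg_def by simp
qed

lemma EE_nonneg: "0 \<le> p \<Longrightarrow> p \<le> 1 \<Longrightarrow> (\<And>E. 0 \<le> f E) \<Longrightarrow> 0 \<le> EE p A f"
  unfolding EE_def by (intro sum_nonneg mult_nonneg_nonneg) auto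

lemma main_bound:
  fixes n k t :: nat and \<alpha> \<beta> K p :: real
  assumes k: "k \<ge> 1" and t: "t \<ge> 1" and a: "0 < \<alpha>" "\<alpha> < 1" and p: "0 < p" "p \<le> 1"
    and tK: "real (k * (t - 1)) \<le> K / p ^ k"
  shows "1 - gnp_prob n p (lemma4p4_property n k \<alpha> \<beta> K p)
    \<le> 2 ^ n * real (n ^ k) ^ t * (2 * exp (- (\<alpha>^2 * p^k * (\<beta> * real n) / 4))) ^ t"
proof -
  define A where "A = all_edges n"
  define P where "P = lemma4p4_property n k \<alpha> \<beta> K p"
  define Xs where "Xs = {X. X \<subseteq> {..<n} \<and> \<beta> * real n \<le> real (card X)}"
  define Fs where "Fs X = {F. F \<subseteq> {S. S \<subseteq> {..<n} - X \<and> card S = k} \<and> card F = t \<and> pairwise disjnt F}" for X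
  define c where "c = 2 * exp (- (\<alpha>^2 * p^k * (\<beta> * real n) / 4))"
  define BS where "BS X S = (\<Union>x\<in>X. edges x S)" for X S
  have finA: "finite A" unfolding A_def all_edges_def by auto
  have finXs: "finite Xs" unfolding Xs_def by (rule finite_subset[of _ "Pow {..<n}"]) auto
  have finFs: "finite (Fs X)" for X unfolding Fs_def by (rule finite_subset[of _ "Pow (Pow {..<n})"]) auto
  have c0: "0 \<le> c" unfolding c_def by simp
  have pw: "(if P E then 0 else 1) \<le> (\<Sum>X\<in>Xs. \<Sum>F\<in>Fs X. \<Prod>S\<in>F. phi \<alpha> p k X S E)" for E
  proof (cases "P E")
    case True
    then show ?thesis by (simp add: sum_nonneg prod_nonneg phi_pos less_imp_le)
  next
    case False
    then obtain X where X: "X \<subseteq> {..<n}" "\<beta> * real n \<le> real (card X)"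
      and noY: "\<not> (\<exists>Y. Y \<subseteq> {..<n} - X \<and> real (card Y) \<le> K / p ^ k \<and>
           (\<forall>S. S \<subseteq> {..<n} - (X \<union> Y) \<and> card S = k \<longrightarrow>
              (1 - \<alpha>) * p ^ k * real (card X) \<le> real (codeg E S X) \<and>
              real (codeg E S X) \<le> (1 + \<alpha>) * p ^ k * real (card X)))"
      unfolding P_def lemma4p4_property_def by blast
    define bad where "bad S = (\<not> ((1 - \<alpha>) * p ^ k * real (card X) \<le> real (codeg E S X) \<and>
              real (codeg E S X) \<le> (1 + \<alpha>) * p ^ k * real (card X)))" for S
    have "finite ({..<n} - X)" by simp
    from max_family[OF this k t, of bad]
    obtain F where F: "F \<subseteq> {S. S \<subseteq> {..<n} - X \<and> card S = k}" "card F = t" "pairwise disjnt F" "\<forall>S\<in>F. bad S"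
    proof (elim disjE exE conjE)
      fix Y assume Y: "Y \<subseteq> {..<n} - X" "card Y \<le> k * (t - 1)" "\<forall>S. S \<subseteq> {..<n} - X - Y \<and> card S = k \<longrightarrow> \<not> bad S"
      have "real (card Y) \<le> K / p ^ k" using Y(2) tK by (metis of_nat_le_iff order_trans)
      moreover have "{..<n} - (X \<union> Y) = {..<n} - X - Y" by auto
      ultimately show ?thesis using noY Y(1,3) unfolding bad_def by metis
    qed auto
    have XXs: "X \<in> Xs" using X unfolding Xs_def by auto
    have FFs: "F \<in> Fs X" using F unfolding Fs_def by auto
    have "1 \<le> (\<Prod>S\<in>F. phi \<alpha> p k X S E)"
      using F(4) a(1) by (intro prod_ge_1) (auto intro: phi_ge1 simp: bad_def)
    also have "\<dots> \<le> (\<Sum>F\<in>Fs X. \<Prod>S\<in>F. phi \<alpha> p k X S E)"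
      by (rule member_le_sum[OF FFs _ finFs]) (simp add: prod_nonneg phi_pos less_imp_le)
    also have "\<dots> \<le> (\<Sum>X\<in>Xs. \<Sum>F\<in>Fs X. \<Prod>S\<in>F. phi \<alpha> p k X S E)"
      by (rule member_le_sum[OF XXs _ finXs]) (simp add: sum_nonneg prod_nonneg phi_pos less_imp_le)
    finally show ?thesis using False by simp
  qed
  have "1 - gnp_prob n p P = EE p A (\<lambda>E. 1 + (-1) * (if P E then 1 else 0))"
    using EE_one[OF finA, of p] unfolding gnp_EE EE_add EE_const_mult A_def by simp
  also have "\<dots> = EE p A (\<lambda>E. if P E then 0 else 1)" by (rule EE_cong) simp
  also have "\<dots> \<le> EE p A (\<lambda>E. \<Sum>X\<in>Xs. \<Sum>F\<in>Fs X. \<Prod>S\<in>F. phi \<alpha> p k X S E)"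
    using p by (intro EE_mono pw) auto
  also have "\<dots> = (\<Sum>X\<in>Xs. \<Sum>F\<in>Fs X. EE p A (\<lambda>E. \<Prod>S\<in>F. phi \<alpha> p k X S E))"
    unfolding EE_sum ..
  also have "\<dots> = (\<Sum>X\<in>Xs. \<Sum>F\<in>Fs X. \<Prod>S\<in>F. EE p A (phi \<alpha> p k X S))"
  proof (intro sum.cong refl)
    fix X F assume XX: "X \<in> Xs" and FF: "F \<in> Fs X"
    have Xn: "X \<subseteq> {..<n}" using XX unfolding Xs_def by auto
    have Fp: "\<And>S. S \<in> F \<Longrightarrow> S \<subseteq> {..<n} - X \<and> card S = k" "pairwise disjnt F" "card F = t"
      using FF unfolding Fs_def by auto
    have finF: "finite F"
    proof (rule ccontr)
      assume "infinite F"
      then have "card F = 0" by simp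
      then show False using Fp(3) t by simp
    qed
    show "EE p A (\<lambda>E. \<Prod>S\<in>F. phi \<alpha> p k X S E) = (\<Prod>S\<in>F. EE p A (phi \<alpha> p k X S))"
    proof (rule EE_prod_indep[OF finA finF, where B = "BS X"])
      show "\<forall>j\<in>F. BS X j \<subseteq> A"
      proof
        fix S assume S: "S \<in> F"
        have "\<forall>x\<in>X. edges x S \<subseteq> all_edges n"
          using Fp(1)[OF S] Xn by (intro ballI edges_sub) auto
        then show "BS X S \<subseteq> A" unfolding BS_def A_def by (intro UN_least) auto
      qed
      show "\<forall>i\<in>F. \<forall>j\<in>F. i \<noteq> j \<longrightarrow> BS X i \<inter> BS X j = {}"
      proof (intro ballI impI)
        fix i j assume ij: "i \<in> F" "j \<in> F" "i \<noteq> j"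
        then have "i \<inter> j = {}" using Fp(2) unfolding pairwise_def disjnt_def by blast
        moreover have "i \<inter> X = {}" "j \<inter> X = {}" using Fp(1)[OF ij(1)] Fp(1)[OF ij(2)] by auto
        ultimately have "\<forall>x\<in>X. \<forall>x'\<in>X. edges x i \<inter> edges x' j = {}"
          by (intro ballI edges_disj) auto
        then show "BS X i \<inter> BS X j = {}"
          unfolding BS_def by blast
      qed
      show "\<forall>j\<in>F. \<forall>E. phi \<alpha> p k X j E = phi \<alpha> p k X j (E \<inter> BS X j)"
      proof (intro ballI allI)
        fix S E assume "S \<in> F"
        then have "S \<inter> X = {}" using Fp(1) by auto
        then have "codeg E S X = codeg (E \<inter> BS X S) S X" unfolding BS_def by (rule codeg_restrict)
        then show "phi \<alpha> p k X S E = phi \<alpha> p k X S (E \<inter> BS X S)" unfolding phi_def by simp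
      qed
    qed
  qed
  also have "\<dots> \<le> (\<Sum>X\<in>Xs. \<Sum>F\<in>Fs X. c ^ t)"
  proof (intro sum_mono)
    fix X F assume XX: "X \<in> Xs" and FF: "F \<in> Fs X"
    have Xn: "X \<subseteq> {..<n}" and Xc: "\<beta> * real n \<le> real (card X)" using XX unfolding Xs_def by auto
    have Fp: "\<And>S. S \<in> F \<Longrightarrow> S \<subseteq> {..<n} - X \<and> card S = k" "card F = t"
      using FF unfolding Fs_def by auto
    have "(\<Prod>S\<in>F. EE p A (phi \<alpha> p k X S)) \<le> (\<Prod>S\<in>F. c)"
    proof (rule prod_mono)
      fix S assume S: "S \<in> F"
      have "0 \<le> EE p A (phi \<alpha> p k X S)" using p by (intro EE_nonneg) (auto intro: less_imp_le phi_pos)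
      moreover have "EE p A (phi \<alpha> p k X S) \<le> 2 * exp (- (\<alpha>^2 * p ^ k * real (card X) / 4))"
        unfolding A_def using Fp(1)[OF S] Xn p a by (intro phi_EE) auto
      moreover have "2 * exp (- (\<alpha>^2 * p ^ k * real (card X) / 4)) \<le> c"
      proof -
        have "0 \<le> \<alpha>^2 * p ^ k" using p by simp
        then have "\<alpha>^2 * p ^ k * (\<beta> * real n) \<le> \<alpha>^2 * p ^ k * real (card X)"
          using mult_left_mono[OF Xc] by blast
        then show ?thesis unfolding c_def by simp
      qed
      ultimately show "0 \<le> EE p A (phi \<alpha> p k X S) \<and> EE p A (phi \<alpha> p k X S) \<le> c" by linarith
    qed
    also have "\<dots> = c ^ t" using Fp(2) by simp
    finally show "(\<Prod>S\<in>F. EE p A (phi \<alpha> p k X S)) \<le> c ^ t" .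
  qed
  also have "\<dots> = (\<Sum>X\<in>Xs. real (card (Fs X)) * c ^ t)" by simp
  also have "\<dots> \<le> (\<Sum>X\<in>Xs. real (n ^ k) ^ t * c ^ t)"
  proof (intro sum_mono mult_right_mono)
    fix X assume "X \<in> Xs"
    define KS where "KS = {S. S \<subseteq> {..<n} \<and> card S = k}"
    have "Fs X \<subseteq> {F. F \<subseteq> KS \<and> card F = t}" unfolding Fs_def KS_def by auto
    then have "card (Fs X) \<le> card {F. F \<subseteq> KS \<and> card F = t}"
      by (rule card_mono[rotated]) (auto simp: KS_def)
    also have "\<dots> = card KS choose t" by (rule n_subsets) (auto simp: KS_def)
    also have "\<dots> \<le> card KS ^ t" by (rule choose_le_pow)
    also have "card KS = n choose k" unfolding KS_def using n_subsets[of "{..<n}" k] by simp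
    also have "(n choose k) ^ t \<le> (n ^ k) ^ t" by (intro power_mono choose_le_pow) auto
    finally show "real (card (Fs X)) \<le> real (n ^ k) ^ t" by (simp flip: of_nat_power)
  qed (use c0 in auto)
  also have "\<dots> = real (card Xs) * (real (n ^ k) ^ t * c ^ t)" by simp
  also have "\<dots> \<le> 2 ^ n * (real (n ^ k) ^ t * c ^ t)"
  proof (intro mult_right_mono)
    have "card Xs \<le> card (Pow {..<n})" unfolding Xs_def by (rule card_mono) auto
    then show "real (card Xs) \<le> 2 ^ n" by (simp add: card_Pow flip: of_nat_power)
  qed (use c0 in auto)
  finally show ?thesis unfolding c_def P_def by (simp add: mult.assoc)
qed

lemma final_n:
  fixes k n :: nat and \<alpha> \<beta> K p :: real
  assumes k: "k \<ge> 1" and a: "0 < \<alpha>" "\<alpha> < 1" and b: "0 < \<beta>"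
    and K: "K = 12 * real k / (\<alpha>^2 * \<beta>)"
    and n: "1 \<le> ln (real n)" and p1: "p \<le> 1"
    and pl: "p \<ge> (K * ln (real n) / real n) powr (1 / real k)"
  shows "1 - exp (- ((2 - 2 * ln 2) * real n) + real k * ln (real n) + ln 2)
     \<le> gnp_prob n p (lemma4p4_property n k \<alpha> \<beta> K p)"
proof -
  have Kpos: "K > 0" using K k a b by simp
  have npos: "real n > 0" using n by (cases "n = 0") auto
  have lnpos: "ln (real n) > 0" using n by simp
  define x where "x = K * ln (real n) / real n"
  have xpos: "x > 0" unfolding x_def using Kpos npos lnpos by simp
  have "x powr (1 / real k) > 0" using xpos by simp
  then have ppos: "p > 0" using pl unfolding x_def by linarith
  define q where "q = p ^ k"
  have qpos: "q > 0" unfolding q_def using ppos by simp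
  have "(x powr (1 / real k)) ^ k = x"
    using xpos k by (simp add: powr_power)
  moreover have "(x powr (1 / real k)) ^ k \<le> p ^ k"
    using pl unfolding x_def by (intro power_mono) auto
  ultimately have qx: "x \<le> q" unfolding q_def by simp
  define r where "r = K / (real k * q)"
  have rpos: "r > 0" unfolding r_def using Kpos qpos k by simp
  define t where "t = nat \<lfloor>r\<rfloor> + 1"
  have t1: "t \<ge> 1" unfolding t_def by simp
  have fl: "real_of_int \<lfloor>r\<rfloor> \<le> r" "r < real_of_int \<lfloor>r\<rfloor> + 1" by (rule of_int_floor_le, rule real_of_int_floor_add_one_gt)
  have fl0: "\<lfloor>r\<rfloor> \<ge> 0" using rpos by simp
  have tt: "real t = real_of_int \<lfloor>r\<rfloor> + 1" "real (t - 1) = real_of_int \<lfloor>r\<rfloor>"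
    unfolding t_def using fl0 by simp_all
  have tr: "real t > r" "real t \<le> r + 1" "real (t - 1) \<le> r"
    using tt fl by linarith+
  have tK: "real (k * (t - 1)) \<le> K / p ^ k"
  proof -
    have "real (k * (t - 1)) = real k * real (t - 1)" by simp
    also have "\<dots> \<le> real k * r" using tr(3) by (intro mult_left_mono) auto
    also have "\<dots> = K / p ^ k" unfolding r_def q_def using k by (simp add: field_simps)
    finally show ?thesis .
  qed
  define y where "y = \<alpha>^2 * q * (\<beta> * real n) / 4"
  have mb: "1 - gnp_prob n p (lemma4p4_property n k \<alpha> \<beta> K p)
    \<le> 2 ^ n * real (n ^ k) ^ t * (2 * exp (- y)) ^ t"
    using main_bound[OF k t1 a ppos p1 tK] unfolding y_def q_def by simp
  have eq: "2 ^ n * real (n ^ k) ^ t * (2 * exp (- y)) ^ t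
     = exp (real n * ln 2 + real t * real k * ln (real n) + real t * ln 2 - real t * y)"
  proof -
    have e1: "(2::real) ^ n = exp (real n * ln 2)" by (simp add: exp_of_nat_mult)
    have e2: "real (n ^ k) ^ t = exp (real t * real k * ln (real n))"
    proof -
      have "real (n ^ k) ^ t = exp (ln (real n)) ^ (k * t)" using npos by (simp add: power_mult)
      also have "\<dots> = exp (real t * real k * ln (real n))"
        by (simp add: exp_of_nat_mult[symmetric] mult_ac)
      finally show ?thesis .
    qed
    have e3: "(2 * exp (- y)) ^ t = exp (real t * ln 2 - real t * y)"
    proof -
      have "(2 * exp (- y)) ^ t = exp (ln 2 - y) ^ t" by (simp add: exp_diff exp_minus field_simps)
      also have "\<dots> = exp (real t * ln 2 - real t * y)"
        by (simp add: exp_of_nat_mult[symmetric] algebra_simps)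
      finally show ?thesis .
    qed
    show ?thesis unfolding e1 e2 e3 by (simp add: exp_add[symmetric] exp_diff algebra_simps)
  qed
  have i1: "real t * y \<ge> 3 * real n"
  proof -
    have "real t * q > r * q" using tr(1) qpos by simp
    also have "r * q = 12 / (\<alpha>^2 * \<beta>)" unfolding r_def K using qpos k by (simp add: field_simps)
    finally have tq: "real t * q > 12 / (\<alpha>^2 * \<beta>)" .
    have pos: "\<alpha>^2 * \<beta> * real n / 4 \<ge> 0" using a b npos by simp
    have "real t * y = (real t * q) * (\<alpha>^2 * \<beta> * real n / 4)" unfolding y_def by (simp add: algebra_simps)
    also have "\<dots> \<ge> 12 / (\<alpha>^2 * \<beta>) * (\<alpha>^2 * \<beta> * real n / 4)"
      using tq pos by (intro mult_right_mono) auto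
    also have "12 / (\<alpha>^2 * \<beta>) * (\<alpha>^2 * \<beta> * real n / 4) = 3 * real n" using a b by (simp add: field_simps)
    finally show ?thesis .
  qed
  have Kq: "K / q * ln (real n) \<le> real n"
  proof -
    have "K * ln (real n) \<le> q * real n" using qx npos unfolding x_def by (simp add: field_simps)
    then show ?thesis using qpos by (simp add: field_simps)
  qed
  have i2: "real t * real k * ln (real n) \<le> real n + real k * ln (real n)"
  proof -
    have "real t * real k * ln (real n) \<le> (r + 1) * real k * ln (real n)"
      using tr(2) lnpos by (intro mult_right_mono) auto
    also have "\<dots> = K / q * ln (real n) + real k * ln (real n)"
      unfolding r_def using k by (simp add: field_simps)
    finally show ?thesis using Kq by linarith
  qed
  have i3: "real t * ln 2 \<le> (real n + 1) * ln 2"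
  proof -
    have "r \<le> K / q" unfolding r_def using k Kpos qpos by (simp add: field_simps)
    also have "K / q \<le> K / q * ln (real n)" using mult_left_mono[OF n, of "K/q"] Kpos qpos by simp
    finally have "r \<le> real n" using Kq by linarith
    then have "real t \<le> real n + 1" using tr(2) by linarith
    then show ?thesis by (intro mult_right_mono) auto
  qed
  have "1 - gnp_prob n p (lemma4p4_property n k \<alpha> \<beta> K p)
      \<le> exp (real n * ln 2 + real t * real k * ln (real n) + real t * ln 2 - real t * y)"
    using mb eq by simp
  also have "\<dots> \<le> exp (- ((2 - 2 * ln 2) * real n) + real k * ln (real n) + ln 2)"
    using i1 i2 i3 by (simp add: algebra_simps)
  finally show ?thesis by simp
qed

lemma R_lim:
  fixes c :: real and k :: nat assumes "c > 0"
  shows "(\<lambda>n. exp (- (c * real n) + real k * ln (real n) + ln 2)) \<longlonglongrightarrow> 0"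
  using assms by real_asymp

lemma ln_ev: "\<forall>\<^sub>F n in sequentially. 1 \<le> ln (real n)"
  by real_asymp

theorem lemma4p4:
  fixes k :: nat and \<alpha> \<beta> K :: real and p :: "nat \<Rightarrow> real"
  assumes "k \<ge> 1"
    and "0 < \<alpha>" "\<alpha> < 1" "0 < \<beta>" "\<beta> < 1"
    and "K = 12 * real k / (\<alpha>^2 * \<beta>)"
    and "\<forall>\<^sub>F n in sequentially. p n \<le> 1"
    and "\<forall>\<^sub>F n in sequentially. p n \<ge> (K * ln (real n) / real n) powr (1 / real k)"
  shows "(\<lambda>n. gnp_prob n (p n) (lemma4p4_property n k \<alpha> \<beta> K (p n)))
           \<longlonglongrightarrow> 1"
proof -
  define c where "c = 2 - 2 * ln (2::real)"
  have c: "c > 0" unfolding c_def using ln_2_less_1 by simp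
  define R where "R n = exp (- (c * real n) + real k * ln (real n) + ln 2)" for n :: nat
  have R0: "R \<longlonglongrightarrow> 0" unfolding R_def by (rule R_lim[OF c])
  then have lo: "(\<lambda>n. 1 - R n) \<longlonglongrightarrow> 1" by (auto intro: tendsto_eq_intros)
  have ev: "\<forall>\<^sub>F n in sequentially.
     1 - R n \<le> gnp_prob n (p n) (lemma4p4_property n k \<alpha> \<beta> K (p n)) \<and>
     gnp_prob n (p n) (lemma4p4_property n k \<alpha> \<beta> K (p n)) \<le> 1"
    using assms(7) assms(8) ln_ev
  proof eventually_elim
    case (elim n)
    have lb: "1 - R n \<le> gnp_prob n (p n) (lemma4p4_property n k \<alpha> \<beta> K (p n))"
      unfolding R_def c_def using final_n[OF assms(1-4) assms(6) elim(3) elim(1) elim(2)] by simp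
    have p0: "0 \<le> p n" using elim(2) by (smt (verit) powr_ge_zero)
    have "gnp_prob n (p n) (lemma4p4_property n k \<alpha> \<beta> K (p n))
        \<le> EE (p n) (all_edges n) (\<lambda>_. 1)"
      unfolding gnp_EE using p0 elim(1) by (intro EE_mono) auto
    also have "\<dots> = 1" by (rule EE_one) (simp add: all_edges_def)
    finally show ?case using lb by simp
  qed
  show ?thesis
  proof (rule tendsto_sandwich[OF _ _ lo tendsto_const])
    show "\<forall>\<^sub>F n in sequentially. 1 - R n \<le> gnp_prob n (p n) (lemma4p4_property n k \<alpha> \<beta> K (p n))"
      using ev by (rule eventually_mono) simp
    show "\<forall>\<^sub>F n in sequentially. gnp_prob n (p n) (lemma4p4_property n k \<alpha> \<beta> K (p n)) \<le> 1"
      using ev by (rule eventually_mono) simp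
  qed
qed

end
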